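(* $\mathbf{Fin}<_{\mathrm{Learn}} Id <_{\mathrm{Learn}} \mathbf{co}$, and $\mathbf{Fin}\equiv^{\mathrm{fin}}_{\mathrm{Learn}} Id\equiv^{\mathrm{fin}}_{\mathrm{Learn}}\mathbf{co}$. That is: every $\mathbf{Fin}$-learnable family is $Id$-learnable, every $Id$-learnable family is $\mathbf{co}$-learnable, there is an $Id$-learnable family that is not $\mathbf{Fin}$-learnable, there is a $\mathbf{co}$-learnable family that is not $Id$-learnable, and for finite families the three notions coincide.
   Context: All structures are countable, have domain $\mathbb{N}$, are in a finite relational signature, and are identified with their atomic diagrams (elements of $2^{\mathbb{N}}$). A family of structures $\mathfrak{K}$ is a countable set of pairwise nonisomorphic such structures. $\mathcal{S}\restriction_s$ is the finite substructure of $\mathcal{S}$ on $\{0,\dots,s\}$. $\mathrm{LD}(\mathfrak{K})\subseteq 2^{\mathbb{N}}$ is the set of structures with domain $\mathbb{N}$ isomorphic to a member of $\mathfrak{K}$ (subspace topology). The hypothesis space is $\{\ulcorner\mathcal{A}\urcorner:\mathcal{A}\in\mathfrak{K}\}\cup\{?\}$; a learner is an arbitrary function from $\{\mathcal{S}\restriction_s:\mathcal{S}\in\mathrm{LD}(\mathfrak{K})\}$ to the hypothesis space. $\mathbf{Fin}$-learnable: some learner $\mathbf{M}$ such that for each $\mathcal{S}\in\mathrm{LD}(\mathfrak{K})$ there is $s_0$ with $\mathbf{M}(\mathcal{S}\restriction_t)=?$ for $t<s_0$ and $\mathbf{M}(\mathcal{S}\restriction_t)=\ulcorner\mathcal{A}\urcorner$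 for $t\ge s_0$, where $\mathcal{A}\cong\mathcal{S}$. $\mathbf{co}$-learnable: some learner $\mathbf{M}$ such that for each $\mathcal{S}\in\mathrm{LD}(\mathfrak{K})$, $\{\mathbf{M}(\mathcal{S}\restriction_s):s\}\setminus\{?\}=\{\ulcorner\mathcal{B}\urcorner:\mathcal{B}\in\mathfrak{K},\mathcal{B}\neq\mathcal{A}\}$ where $\mathcal{A}\cong\mathcal{S}$. For an equivalence relation $E$ on a space $X$, $\mathfrak{K}$ is $E$-learnable if there is a continuous $\Gamma:\mathrm{LD}(\mathfrak{K})\to X$ with $\mathcal{S}\cong\mathcal{S}'\iff\Gamma(\mathcal{S})\,E\,\Gamma(\mathcal{S}')$ for all $\mathcal{S},\mathcal{S}'\in\mathrm{LD}(\mathfrak{K})$. $Id$ is equality on Baire space $\mathbb{N}^{\mathbb{N}}$. For learning criteria $X,Y$ (learning paradigms or equivalence relations): $X\leq_{\mathrm{Learn}}Y$ means every $X$-learnable family is $Y$-learnable; $X\leq^{\mathrm{fin}}_{\mathrm{Learn}}Y$ means every finite $X$-learnable family is $Y$-learnable; $<$ means $\leq$ and not $\geq$; $\equiv$ means both directions. *)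

theory Defs
  imports "HOL-Analysis.Analysis"
begin

text \<open>A finite relational signature is a list of arities: relation symbol i (i < length sig)
  has arity sig ! i.  A structure with domain nat is given by its relations, as a
  predicate on (symbol, tuple); this is the atomic diagram.\<close>

type_synonym struc = "nat \<Rightarrow> nat list \<Rightarrow> bool"
type_synonym sig = "nat list"

definition is_struc :: "sig \<Rightarrow> struc \<Rightarrow> bool" where
  "is_struc \<sigma> R \<longleftrightarrow> (\<forall>i xs. R i xs \<longrightarrow> i < length \<sigma> \<and> length xs = \<sigma> ! i)"

definition iso :: "struc \<Rightarrow> struc \<Rightarrow> bool" where
  "iso R R' \<longleftrightarrow> (\<exists>f :: nat \<Rightarrow> nat. bij f \<and> (\<forall>i xs. R i xs \<longleftrightarrow> R' i (map f xs)))"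

text \<open>Finite substructure on {0..s}; a learner receives s together with it.\<close>
definition restr :: "struc \<Rightarrow> nat \<Rightarrow> struc" where
  "restr R s = (\<lambda>i xs. R i xs \<and> (\<forall>x\<in>set xs. x \<le> s))"

definition family :: "sig \<Rightarrow> struc set \<Rightarrow> bool" where
  "family \<sigma> K \<longleftrightarrow> countable K \<and> (\<forall>A\<in>K. is_struc \<sigma> A)
     \<and> (\<forall>A\<in>K. \<forall>B\<in>K. iso A B \<longrightarrow> A = B)"

definition LD :: "sig \<Rightarrow> struc set \<Rightarrow> struc set" where
  "LD \<sigma> K = {S. is_struc \<sigma> S \<and> (\<exists>A\<in>K. iso S A)}"

text \<open>Learners: functions from finite substructures (s, S|s) to hypotheses;
  None is the hypothesis ?, Some A is the name of A.\<close>
type_synonym learner = "nat \<Rightarrow> struc \<Rightarrow> struc option"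

definition Fin_learnable :: "sig \<Rightarrow> struc set \<Rightarrow> bool" where
  "Fin_learnable \<sigma> K \<longleftrightarrow> (\<exists>M :: learner. \<forall>S\<in>LD \<sigma> K. \<exists>s0.
      (\<forall>t<s0. M t (restr S t) = None) \<and>
      (\<exists>A\<in>K. iso S A \<and> (\<forall>t\<ge>s0. M t (restr S t) = Some A)))"

definition co_learnable :: "sig \<Rightarrow> struc set \<Rightarrow> bool" where
  "co_learnable \<sigma> K \<longleftrightarrow> (\<exists>M :: learner. \<forall>S\<in>LD \<sigma> K. \<forall>A\<in>K. iso S A \<longrightarrow>
      {B. \<exists>s. M s (restr S s) = Some B} = K - {A})"

definition struc_top :: "struc topology" where
  "struc_top = product_topology (\<lambda>i. product_topology (\<lambda>xs. discrete_topology (UNIV :: bool set)) UNIV) UNIV"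

definition baire_top :: "(nat \<Rightarrow> nat) topology" where
  "baire_top = product_topology (\<lambda>n. discrete_topology (UNIV :: nat set)) UNIV"

definition Id_learnable :: "sig \<Rightarrow> struc set \<Rightarrow> bool" where
  "Id_learnable \<sigma> K \<longleftrightarrow> (\<exists>\<Gamma> :: struc \<Rightarrow> (nat \<Rightarrow> nat).
      continuous_map (subtopology struc_top (LD \<sigma> K)) baire_top \<Gamma> \<and>
      (\<forall>S\<in>LD \<sigma> K. \<forall>S'\<in>LD \<sigma> K. iso S S' \<longleftrightarrow> \<Gamma> S = \<Gamma> S'))"

end

theory Submission
  imports Defs "HOL-Library.Nat_Bijection"
begin


lemma iso_refl: "iso S S"
  unfolding iso_def by (rule exI[of _ id]) (simp)

lemma iso_sym: "iso S B \<Longrightarrow> iso B S"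
proof -
  assume "iso S B"
  then obtain f where f: "bij f" "\<forall>i xs. S i xs \<longleftrightarrow> B i (map f xs)" unfolding iso_def by blast
  have "\<forall>i xs. B i xs \<longleftrightarrow> S i (map (inv f) xs)"
  proof (intro allI)
    fix i xs
    have "map f (map (inv f) xs) = xs" using f(1) by (simp add: map_idI bij_is_surj surj_f_inv_f)
    then show "B i xs \<longleftrightarrow> S i (map (inv f) xs)" using f(2) by metis
  qed
  then show ?thesis unfolding iso_def using bij_imp_bij_inv[OF f(1)] by blast
qed

lemma iso_trans: "iso S B \<Longrightarrow> iso B C \<Longrightarrow> iso S C"
proof -
  assume "iso S B" "iso B C"
  then obtain f g where f: "bij f" "\<forall>i xs. S i xs \<longleftrightarrow> B i (map f xs)"
    and g: "bij g" "\<forall>i xs. B i xs \<longleftrightarrow> C i (map g xs)" unfolding iso_def by blast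
  have "\<forall>i xs. S i xs \<longleftrightarrow> C i (map (g \<circ> f) xs)" using f g by simp
  then show ?thesis unfolding iso_def using bij_comp[OF f(1) g(1)] by blast
qed

lemma restr_mono: "restr S s = restr S' s \<Longrightarrow> t \<le> s \<Longrightarrow> restr S t = restr S' t"
  unfolding restr_def by (auto simp: fun_eq_iff) (meson order_trans)+

lemma restr_eqD: "restr S s = restr S' s \<Longrightarrow> \<forall>x\<in>set xs. x \<le> s \<Longrightarrow> S i xs = S' i xs"
  unfolding restr_def by (metis)

lemma topspace_struc[simp]: "topspace struc_top = UNIV"
  unfolding struc_top_def by simp

lemma topspace_baire[simp]: "topspace baire_top = UNIV"
  unfolding baire_top_def by simp

lemma proj_cont: "continuous_map struc_top (discrete_topology UNIV) (\<lambda>S. S i xs)"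
proof -
  have "continuous_map struc_top (product_topology (\<lambda>xs. discrete_topology (UNIV :: bool set)) UNIV) (\<lambda>S. S i)"
    unfolding struc_top_def by (rule continuous_map_product_projection) simp
  moreover have "continuous_map (product_topology (\<lambda>xs. discrete_topology (UNIV :: bool set)) UNIV) (discrete_topology UNIV) (\<lambda>T. T xs)"
    by (rule continuous_map_product_projection) simp
  ultimately show ?thesis using continuous_map_compose[unfolded o_def] by blast
qed

lemma open_coord: "openin struc_top {S'. S' i xs = b}"
proof -
  have "openin struc_top {S' \<in> topspace struc_top. S' i xs \<in> {b}}"
    by (rule openin_continuous_map_preimage[OF proj_cont]) simp
  then show ?thesis by simp
qed

lemma loc_const_cont:
  assumes "\<forall>S\<in>LD \<sigma> K. \<exists>s. \<forall>S'\<in>LD \<sigma> K. restr S' s = restr S s \<longrightarrow> g S' = g S"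
    and "topspace Y = UNIV"
  shows "continuous_map (subtopology struc_top (LD \<sigma> K)) Y g"
  unfolding continuous_map_def
proof (intro conjI allI impI)
  show "g \<in> topspace (subtopology struc_top (LD \<sigma> K)) \<rightarrow> topspace Y" using assms(2) by simp
  fix U assume "openin Y U"
  show "openin (subtopology struc_top (LD \<sigma> K)) {x \<in> topspace (subtopology struc_top (LD \<sigma> K)). g x \<in> U}"
  proof (subst openin_subopen, intro ballI)
    fix S assume "S \<in> {x \<in> topspace (subtopology struc_top (LD \<sigma> K)). g x \<in> U}"
    then have S: "S \<in> LD \<sigma> K" "g S \<in> U" by auto
    then obtain s where s: "\<forall>S'\<in>LD \<sigma> K. restr S' s = restr S s \<longrightarrow> g S' = g S" using assms(1) by blast
    define F where "F = Sigma {..<length \<sigma>} (\<lambda>i. {xs. set xs \<subseteq> {..s} \<and> length xs = \<sigma>!i})"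
    have fin: "finite F" unfolding F_def by (rule finite_SigmaI) (auto intro: finite_lists_length_eq)
    define T where "T = (\<Inter>p\<in>F. {S'. S' (fst p) (snd p) = S (fst p) (snd p)}) \<inter> topspace struc_top"
    have oT: "openin struc_top T" unfolding T_def by (rule openin_INT[OF fin]) (rule open_coord)
    have "S \<in> LD \<sigma> K \<inter> T" using S(1) unfolding T_def by simp
    moreover have "LD \<sigma> K \<inter> T \<subseteq> {x \<in> topspace (subtopology struc_top (LD \<sigma> K)). g x \<in> U}"
    proof
      fix S' assume S': "S' \<in> LD \<sigma> K \<inter> T"
      have "restr S' s = restr S s"
      proof (unfold restr_def, intro ext)
        fix i xs
        show "(S' i xs \<and> (\<forall>x\<in>set xs. x \<le> s)) = (S i xs \<and> (\<forall>x\<in>set xs. x \<le> s))"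
        proof (cases "(i, xs) \<in> F")
          case True then show ?thesis using S' unfolding T_def by force
        next
          case False
          have "is_struc \<sigma> S'" "is_struc \<sigma> S" using S' S(1) unfolding LD_def by auto
          show ?thesis
          proof (cases "\<forall>x\<in>set xs. x \<le> s")
            case True
            then have "\<not> (i < length \<sigma> \<and> length xs = \<sigma>!i)" using False unfolding F_def by blast
            then have "\<not> S' i xs" "\<not> S i xs" using \<open>is_struc \<sigma> S'\<close> \<open>is_struc \<sigma> S\<close> unfolding is_struc_def by blast+
            then show ?thesis by blast
          qed blast
        qed
      qed
      then have "g S' = g S" using s S' by blast
      then show "S' \<in> {x \<in> topspace (subtopology struc_top (LD \<sigma> K)). g x \<in> U}"
        using S' S(2) by simp
    qed
    moreover have "openin (subtopology struc_top (LD \<sigma> K)) (LD \<sigma> K \<inter> T)"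
      by (rule openin_subtopology_Int2[OF oT])
    ultimately show "\<exists>T. openin (subtopology struc_top (LD \<sigma> K)) T \<and> S \<in> T \<and> T \<subseteq> {x \<in> topspace (subtopology struc_top (LD \<sigma> K)). g x \<in> U}"
      by blast
  qed
qed

lemma seq_limit:
  assumes "\<forall>j. restr (T j) j = restr S j"
  shows "limitin struc_top T S sequentially"
proof -
  have "limitin (discrete_topology UNIV) (\<lambda>c. T c i xs) (S i xs) sequentially" for i xs
  proof -
    obtain m where m: "\<forall>x\<in>set xs. x \<le> m" using finite_nat_set_iff_bounded_le by blast
    have "\<forall>\<^sub>F c in sequentially. T c i xs = S i xs"
      unfolding eventually_sequentially
    proof (intro exI allI impI)
      fix c assume "m \<le> c"
      then show "T c i xs = S i xs" using restr_eqD[OF assms[rule_format, of c]] m by (meson order_trans)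
    qed
    then show ?thesis by (intro limitin_eventually) auto
  qed
  then show ?thesis by (simp add: struc_top_def limitin_componentwise)
qed



definition cls :: "struc set \<Rightarrow> struc \<Rightarrow> struc" where
  "cls K S = (THE A. A \<in> K \<and> iso S A)"

lemma cls_unique:
  assumes "family \<sigma> K" "A \<in> K" "iso S A"
  shows "cls K S = A"
  unfolding cls_def
proof (rule the_equality)
  show "A \<in> K \<and> iso S A" using assms by simp
  fix B assume "B \<in> K \<and> iso S B"
  then have "iso A B" using iso_trans[OF iso_sym[OF assms(3)]] by blast
  then show "B = A" using assms \<open>B \<in> K \<and> iso S B\<close> unfolding family_def by blast
qed

lemma cls_prop:
  assumes "family \<sigma> K" "S \<in> LD \<sigma> K"
  shows "cls K S \<in> K \<and> iso S (cls K S)"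
proof -
  obtain A where "A \<in> K" "iso S A" using assms(2) unfolding LD_def by blast
  then show ?thesis using cls_unique[OF assms(1)] by simp
qed

lemma K_sub_LD: assumes "family \<sigma> K" "B \<in> K" shows "B \<in> LD \<sigma> K"
proof -
  have "is_struc \<sigma> B" using assms unfolding family_def by simp
  moreover have "\<exists>A\<in>K. iso B A" by (rule bexI[of _ B, OF iso_refl assms(2)])
  ultimately show ?thesis unfolding LD_def by simp
qed

lemma fin_id:
  assumes fam: "family \<sigma> K" and fl: "Fin_learnable \<sigma> K"
  shows "Id_learnable \<sigma> K"
proof -
  obtain M where M: "\<forall>S\<in>LD \<sigma> K. \<exists>s0.
      (\<forall>t<s0. M t (restr S t) = None) \<and>
      (\<exists>A\<in>K. iso S A \<and> (\<forall>t\<ge>s0. M t (restr S t) = Some A))"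
    using fl unfolding Fin_learnable_def by blast
  have cnt: "countable K" using fam unfolding family_def by blast
  define \<Gamma> where "\<Gamma> S = (\<lambda>n::nat. to_nat_on K (cls K S))" for S
  have lc: "\<forall>S\<in>LD \<sigma> K. \<exists>s. \<forall>S'\<in>LD \<sigma> K. restr S' s = restr S s \<longrightarrow> \<Gamma> S' = \<Gamma> S"
  proof
    fix S assume S: "S \<in> LD \<sigma> K"
    obtain s0 A where s0: "\<forall>t<s0. M t (restr S t) = None" "A \<in> K" "iso S A"
        "\<forall>t\<ge>s0. M t (restr S t) = Some A" using M S by blast
    show "\<exists>s. \<forall>S'\<in>LD \<sigma> K. restr S' s = restr S s \<longrightarrow> \<Gamma> S' = \<Gamma> S"
    proof (intro exI ballI impI)
      fix S' assume S': "S' \<in> LD \<sigma> K" and eq: "restr S' s0 = restr S s0"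
      obtain s1 A' where s1: "\<forall>t<s1. M t (restr S' t) = None" "A' \<in> K" "iso S' A'"
        "\<forall>t\<ge>s1. M t (restr S' t) = Some A'" using M S' by blast
      have m: "M s0 (restr S' s0) = Some A" using eq s0(4) by simp
      have "s1 \<le> s0"
      proof (rule ccontr)
        assume "\<not> s1 \<le> s0"
        then have "M s0 (restr S' s0) = None" using s1(1) by simp
        then show False using m by simp
      qed
      then have "A' = A" using s1(4) m by simp
      then show "\<Gamma> S' = \<Gamma> S" unfolding \<Gamma>_def
        using cls_unique[OF fam s0(2,3)] cls_unique[OF fam s1(2,3)] by simp
    qed
  qed
  have cont: "continuous_map (subtopology struc_top (LD \<sigma> K)) baire_top \<Gamma>"
    by (rule loc_const_cont[OF lc]) simp
  have G: "\<forall>S\<in>LD \<sigma> K. \<forall>S'\<in>LD \<sigma> K. iso S S' \<longleftrightarrow> \<Gamma> S = \<Gamma> S'"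
  proof (intro ballI iffI)
    fix S S' assume S: "S \<in> LD \<sigma> K" and S': "S' \<in> LD \<sigma> K"
    {
      assume "iso S S'"
      moreover have "iso S (cls K S)" "cls K S \<in> K" using cls_prop[OF fam S] by auto
      ultimately have "iso S' (cls K S)" using iso_trans[OF iso_sym] by blast
      then have "cls K S' = cls K S" using cls_unique[OF fam \<open>cls K S \<in> K\<close>] by blast
      then show "\<Gamma> S = \<Gamma> S'" unfolding \<Gamma>_def by simp
    }
    {
      assume "\<Gamma> S = \<Gamma> S'"
      then have "\<Gamma> S 0 = \<Gamma> S' 0" by simp
      then have "to_nat_on K (cls K S) = to_nat_on K (cls K S')" unfolding \<Gamma>_def .
      then have "cls K S = cls K S'" using cls_prop[OF fam S] cls_prop[OF fam S'] cnt by simp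
      moreover have "iso S (cls K S)" "iso S' (cls K S')" using cls_prop[OF fam S] cls_prop[OF fam S'] by auto
      ultimately show "iso S S'" using iso_trans[OF _ iso_sym] by metis
    }
  qed
  show ?thesis unfolding Id_learnable_def by (rule exI[of _ \<Gamma>]) (rule conjI[OF cont G])
qed

lemma sep_co:
  assumes fam: "family \<sigma> K"
    and sep: "\<forall>S\<in>LD \<sigma> K. \<forall>B\<in>K. \<not> iso S B \<longrightarrow>
        (\<exists>s0. \<forall>s\<ge>s0. \<forall>S'\<in>LD \<sigma> K. restr S' s = restr S s \<longrightarrow> \<not> iso S' B)"
  shows "co_learnable \<sigma> K"
proof -
  have cnt: "countable K" using fam unfolding family_def by blast
  define b where "b s = from_nat_into K (fst (prod_decode s))" for s
  define M :: learner where "M s D = (if K \<noteq> {} \<and> (\<forall>S'\<in>LD \<sigma> K. restr S' s = D \<longrightarrow> \<not> iso S' (b s))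
       then Some (b s) else None)" for s D
  have "\<forall>S\<in>LD \<sigma> K. \<forall>A\<in>K. iso S A \<longrightarrow> {B. \<exists>s. M s (restr S s) = Some B} = K - {A}"
  proof (intro ballI impI equalityI subsetI)
    fix S A assume S: "S \<in> LD \<sigma> K" and A: "A \<in> K" and SA: "iso S A"
    {
      fix B assume "B \<in> {B. \<exists>s. M s (restr S s) = Some B}"
      then obtain s where "M s (restr S s) = Some B" by blast
      then have c: "K \<noteq> {} \<and> (\<forall>S'\<in>LD \<sigma> K. restr S' s = restr S s \<longrightarrow> \<not> iso S' (b s))" and "B = b s"
        unfolding M_def by (metis option.distinct(1) option.inject)+
      then have "K \<noteq> {}" "B = b s" "\<not> iso S B" using S by blast+
      moreover have "B \<in> K" using calculation from_nat_into unfolding b_def by blast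
      moreover have "B \<noteq> A" using SA calculation by blast
      ultimately show "B \<in> K - {A}" by blast
    }
    {
      fix B assume B: "B \<in> K - {A}"
      have "\<not> iso S B"
      proof
        assume "iso S B"
        then have "iso A B" using iso_trans[OF iso_sym[OF SA]] by blast
        then show False using fam A B unfolding family_def by blast
      qed
      then obtain s0 where s0: "\<forall>s\<ge>s0. \<forall>S'\<in>LD \<sigma> K. restr S' s = restr S s \<longrightarrow> \<not> iso S' B"
        using sep S B by blast
      define s where "s = prod_encode (to_nat_on K B, s0)"
      have "s \<ge> s0" unfolding s_def by (rule le_prod_encode_2)
      moreover have "b s = B" unfolding b_def s_def using cnt B by simp
      ultimately have "K \<noteq> {} \<and> (\<forall>S'\<in>LD \<sigma> K. restr S' s = restr S s \<longrightarrow> \<not> iso S' (b s))"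
        using s0 B by auto
      then have "M s (restr S s) = Some B" unfolding M_def using \<open>b s = B\<close> by simp
      then show "B \<in> {B. \<exists>s. M s (restr S s) = Some B}" by blast
    }
  qed
  then show ?thesis unfolding co_learnable_def by (rule exI[of _ M])
qed

lemma hausdorff_baire: "Hausdorff_space baire_top"
  unfolding baire_top_def by (simp add: Hausdorff_space_product_topology)

lemma id_sep:
  assumes fam: "family \<sigma> K" and il: "Id_learnable \<sigma> K"
  shows "\<forall>S\<in>LD \<sigma> K. \<forall>B\<in>K. \<not> iso S B \<longrightarrow>
        (\<exists>s0. \<forall>s\<ge>s0. \<forall>S'\<in>LD \<sigma> K. restr S' s = restr S s \<longrightarrow> \<not> iso S' B)"
proof (intro ballI impI)
  fix S B assume S: "S \<in> LD \<sigma> K" and B: "B \<in> K" and nSB: "\<not> iso S B"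
  obtain \<Gamma> where cont: "continuous_map (subtopology struc_top (LD \<sigma> K)) baire_top \<Gamma>"
    and G: "\<forall>S\<in>LD \<sigma> K. \<forall>S'\<in>LD \<sigma> K. iso S S' \<longleftrightarrow> \<Gamma> S = \<Gamma> S'"
    using il unfolding Id_learnable_def by blast
  have BL: "B \<in> LD \<sigma> K" using K_sub_LD[OF fam B] .
  show "\<exists>s0. \<forall>s\<ge>s0. \<forall>S'\<in>LD \<sigma> K. restr S' s = restr S s \<longrightarrow> \<not> iso S' B"
  proof (rule ccontr)
    assume "\<not> ?thesis"
    then have ex: "\<forall>s0. \<exists>s\<ge>s0. \<exists>S'\<in>LD \<sigma> K. restr S' s = restr S s \<and> iso S' B" by blast
    have "\<forall>j. \<exists>T. T \<in> LD \<sigma> K \<and> restr T j = restr S j \<and> iso T B"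
    proof
      fix j
      obtain s S' where "s \<ge> j" "S' \<in> LD \<sigma> K" "restr S' s = restr S s" "iso S' B" using ex by blast
      then show "\<exists>T. T \<in> LD \<sigma> K \<and> restr T j = restr S j \<and> iso T B" using restr_mono by blast
    qed
    then obtain T where T: "\<And>j. T j \<in> LD \<sigma> K \<and> restr (T j) j = restr S j \<and> iso (T j) B"
      by metis
    have "limitin (subtopology struc_top (LD \<sigma> K)) T S sequentially"
      unfolding limitin_subtopology using S T seq_limit by auto
    then have l1: "limitin baire_top (\<Gamma> \<circ> T) (\<Gamma> S) sequentially"
      by (rule continuous_map_limit[OF cont])
    have "\<Gamma> (T j) = \<Gamma> B" for j using T[of j] G BL by blast
    then have "\<Gamma> \<circ> T = (\<lambda>j. \<Gamma> B)" by (simp add: fun_eq_iff)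
    then have l2: "limitin baire_top (\<Gamma> \<circ> T) (\<Gamma> B) sequentially" by simp
    have "\<Gamma> S = \<Gamma> B" using limitin_Hausdorff_unique[OF l1 l2] hausdorff_baire by simp
    then show False using nSB G S BL by blast
  qed
qed

lemma id_co: "family \<sigma> K \<Longrightarrow> Id_learnable \<sigma> K \<Longrightarrow> co_learnable \<sigma> K"
  using sep_co id_sep by blast



definition sig5 :: sig where "sig5 = [1,1,2,1,1]"

definition Afin :: "nat \<Rightarrow> struc" where
  "Afin n = (\<lambda>i xs. (i=0 \<and> xs=[1]) \<or> (i=1 \<and> xs=[Suc n]) \<or> (i=2 \<and> (\<exists>x. 1 \<le> x \<and> x \<le> n \<and> xs=[x, Suc x]))
     \<or> (i=3 \<and> xs=[0]) \<or> (i=4 \<and> xs=[n+2]))"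

definition Afin' :: "nat \<Rightarrow> struc" where
  "Afin' n = (\<lambda>i xs. (i=0 \<and> xs=[1]) \<or> (i=1 \<and> xs=[Suc n]) \<or> (i=2 \<and> (\<exists>x. 1 \<le> x \<and> x \<le> n \<and> xs=[x, Suc x]))
     \<or> (i=3 \<and> xs=[n+2]) \<or> (i=4 \<and> xs=[0]))"

definition Ainf :: struc where
  "Ainf = (\<lambda>i xs. (i=0 \<and> xs=[1]) \<or> (i=2 \<and> (\<exists>x. 1 \<le> x \<and> xs=[x, Suc x])) \<or> (i=3 \<and> xs=[0]))"

definition Binf :: struc where
  "Binf = (\<lambda>i xs. (i=0 \<and> xs=[1]) \<or> (i=2 \<and> (\<exists>x. 1 \<le> x \<and> xs=[x, Suc x])) \<or> (i=4 \<and> xs=[0]))"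

definition holds :: "struc \<Rightarrow> (nat \<Rightarrow> nat) \<Rightarrow> (nat \<times> nat list) set \<Rightarrow> bool" where
  "holds S h pat \<longleftrightarrow> (\<forall>p\<in>pat. S (fst p) (map h (snd p)))"

definition has :: "struc \<Rightarrow> (nat \<times> nat list) set \<Rightarrow> bool" where
  "has S pat \<longleftrightarrow> (\<exists>h. holds S h pat)"

definition pq :: "nat \<Rightarrow> (nat \<times> nat list) set" where
  "pq k = {(0,[0]), (1,[k])} \<union> (\<lambda>j. (2,[j,Suc j])) ` {..<k}"

definition pp :: "nat \<Rightarrow> (nat \<times> nat list) set" where
  "pp k = {(0,[0])} \<union> (\<lambda>j. (2,[j,Suc j])) ` {..<k}"

definition rp :: "(nat \<times> nat list) set" where "rp = {(3,[0])}"
definition tp :: "(nat \<times> nat list) set" where "tp = {(4,[0])}"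

lemma fin_pats: "finite (pq k)" "finite (pp k)" "finite rp" "finite tp"
  unfolding pq_def pp_def rp_def tp_def by auto

lemma holds_pq: "holds S h (pq k) \<longleftrightarrow> S 0 [h 0] \<and> S 1 [h k] \<and> (\<forall>j<k. S 2 [h j, h (Suc j)])"
  unfolding holds_def pq_def by auto

lemma holds_pp: "holds S h (pp k) \<longleftrightarrow> S 0 [h 0] \<and> (\<forall>j<k. S 2 [h j, h (Suc j)])"
  unfolding holds_def pp_def by auto

lemma holds_rp: "holds S h rp \<longleftrightarrow> S 3 [h 0]" unfolding holds_def rp_def by auto
lemma holds_tp: "holds S h tp \<longleftrightarrow> S 4 [h 0]" unfolding holds_def tp_def by auto

lemma has_iso: assumes "iso S B" "has S pat" shows "has B pat"
proof -
  obtain f where f: "\<forall>i xs. S i xs \<longleftrightarrow> B i (map f xs)" using assms(1) unfolding iso_def by blast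
  obtain h where h: "holds S h pat" using assms(2) unfolding has_def by blast
  have "holds B (f \<circ> h) pat" using f h unfolding holds_def by simp
  then show ?thesis unfolding has_def by blast
qed

lemma holds_restr:
  assumes "finite pat" "holds S h pat"
  shows "\<exists>s0. \<forall>s\<ge>s0. \<forall>S'. restr S' s = restr S s \<longrightarrow> holds S' h pat"
proof -
  have "finite (\<Union>p\<in>pat. set (map h (snd p)))" using assms(1) by simp
  then obtain m where m: "\<forall>x\<in>(\<Union>p\<in>pat. set (map h (snd p))). x \<le> m"
    using finite_nat_set_iff_bounded_le by blast
  show ?thesis
  proof (intro exI allI impI)
    fix s S' assume "m \<le> s" "restr S' s = restr S s"
    have "S' (fst p) (map h (snd p))" if "p \<in> pat" for p
    proof -
      have "\<forall>x\<in>set (map h (snd p)). x \<le> s" using m that \<open>m \<le> s\<close> by fastforce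
      then show ?thesis using restr_eqD[OF \<open>restr S' s = restr S s\<close>] assms(2) that
        unfolding holds_def by metis
    qed
    then show "holds S' h pat" unfolding holds_def by blast
  qed
qed

lemma has_restr:
  assumes "finite pat" "has S pat"
  shows "\<exists>s0. \<forall>s\<ge>s0. \<forall>S'. restr S' s = restr S s \<longrightarrow> has S' pat"
  using holds_restr[OF assms(1)] assms(2) unfolding has_def by metis

lemma sep_pat:
  assumes "iso S X" "has X pat" "\<not> has B pat" "finite pat"
  shows "\<exists>s0. \<forall>s\<ge>s0. \<forall>S'. restr S' s = restr S s \<longrightarrow> \<not> iso S' B"
proof -
  have "has S pat" using has_iso[OF iso_sym[OF assms(1)] assms(2)] .
  then obtain s0 where s0: "\<forall>s\<ge>s0. \<forall>S'. restr S' s = restr S s \<longrightarrow> has S' pat"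
    using has_restr[OF assms(4)] by blast
  show ?thesis
  proof (intro exI allI impI notI)
    fix s S' assume "s0 \<le> s" "restr S' s = restr S s" "iso S' B"
    then have "has S' pat" using s0 by blast
    then have "has B pat" using has_iso \<open>iso S' B\<close> by blast
    then show False using assms(3) by blast
  qed
qed

lemma Afin_path:
  assumes "Afin m 0 [h 0]" "\<forall>j<k. Afin m 2 [h j, h (Suc j)]"
  shows "\<forall>j\<le>k. h j = Suc j \<and> (j < k \<longrightarrow> j < m)"
proof (intro allI impI)
  fix j assume "j \<le> k"
  then show "h j = Suc j \<and> (j < k \<longrightarrow> j < m)"
  proof (induction j)
    case 0
    then show ?case using assms unfolding Afin_def by auto
  next
    case (Suc j)
    then have hj: "h j = Suc j" by simp
    have "Afin m 2 [h j, h (Suc j)]" using assms(2) Suc.prems by simp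
    then have e: "h (Suc j) = Suc (h j)" "h j \<le> m" unfolding Afin_def by auto
    have "Suc j < k \<longrightarrow> Suc j < m"
    proof
      assume "Suc j < k"
      then have "Afin m 2 [h (Suc j), h (Suc (Suc j))]" using assms(2) by simp
      then have "h (Suc j) \<le> m" unfolding Afin_def by auto
      then show "Suc j < m" using e hj by simp
    qed
    then show ?case using e hj by simp
  qed
qed

lemma F1: "holds (Afin m) h (pq k) \<Longrightarrow> k = m"
proof -
  assume "holds (Afin m) h (pq k)"
  then have a: "Afin m 0 [h 0]" "Afin m 1 [h k]" "\<forall>j<k. Afin m 2 [h j, h (Suc j)]"
    unfolding holds_pq by auto
  have "h k = Suc k" using Afin_path[OF a(1) a(3)] by simp
  moreover have "h k = Suc m" using a(2) unfolding Afin_def by auto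
  ultimately show "k = m" by simp
qed

lemma F2: "\<not> holds Ainf h (pq k)" "\<not> holds Binf h (pq k)"
  unfolding holds_pq Ainf_def Binf_def by auto

lemma F3: "\<not> holds (Afin n) h (pp (Suc n))"
proof
  assume "holds (Afin n) h (pp (Suc n))"
  then have a: "Afin n 0 [h 0]" "\<forall>j<Suc n. Afin n 2 [h j, h (Suc j)]" unfolding holds_pp by auto
  have "h n = Suc n \<and> (n < Suc n \<longrightarrow> n < n)" using Afin_path[OF a(1) a(2)] le_SucI[OF order_refl] by blast
  then have "n < n" by simp
  then show False by simp
qed

lemma F4: "holds (Afin n) Suc (pq n)" "holds Ainf Suc (pp k)" "holds Binf Suc (pp k)"
  unfolding holds_pq holds_pp Afin_def Ainf_def Binf_def by auto

lemma F5: "holds Ainf (\<lambda>_. 0) rp" "\<not> holds Binf h rp" "holds Binf (\<lambda>_. 0) tp" "\<not> holds Ainf h tp"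
  unfolding holds_rp holds_tp Ainf_def Binf_def by auto

lemma structs: "is_struc sig5 (Afin n)" "is_struc sig5 (Afin' n)" "is_struc sig5 Ainf" "is_struc sig5 Binf"
  unfolding is_struc_def sig5_def Afin_def Afin'_def Ainf_def Binf_def by auto

lemma Afin_Ainf_restr: "s \<le> n \<Longrightarrow> restr (Afin n) s = restr Ainf s"
  unfolding restr_def Afin_def Ainf_def by (auto simp: fun_eq_iff)

lemma Afin'_Binf_restr: "s \<le> n \<Longrightarrow> restr (Afin' n) s = restr Binf s"
  unfolding restr_def Afin'_def Binf_def by (auto simp: fun_eq_iff)

lemma Afin_Afin'_iso: "iso (Afin n) (Afin' n)"
proof -
  define f where "f x = (if x = 0 then n+2 else if x = n+2 then 0 else x)" for x
  have ff: "f (f x) = x" for x unfolding f_def by auto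
  have bf: "bij f" by (rule o_bij[of f f]) (auto simp: ff fun_eq_iff)
  have mm: "map f xs = ys \<longleftrightarrow> xs = map f ys" for xs ys
    by (metis (no_types, lifting) ff list.map_comp list.map_id0 comp_def id_apply map_idI)
  have m1: "map f xs = [c] \<longleftrightarrow> xs = [f c]" for xs c using mm[of xs "[c]"] by simp
  have fx: "f x = x" if "1 \<le> x" "x \<le> Suc n" for x using that unfolding f_def by simp
  have m2: "(\<exists>x. 1 \<le> x \<and> x \<le> n \<and> map f xs = [x, Suc x]) \<longleftrightarrow> (\<exists>x. 1 \<le> x \<and> x \<le> n \<and> xs = [x, Suc x])" for xs
  proof -
    have E: "(map f xs = [x,Suc x]) = (xs = [x, Suc x])" if "1 \<le> x" "x \<le> n" for x
      using mm[of xs "[x,Suc x]"] fx[of x] fx[of "Suc x"] that by simp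
    show ?thesis
    proof
      assume "\<exists>x. 1 \<le> x \<and> x \<le> n \<and> map f xs = [x, Suc x]"
      then obtain x where x0: "1 \<le> x \<and> x \<le> n \<and> map f xs = [x, Suc x]" ..
      then have x: "1 \<le> x" "x \<le> n" "map f xs = [x, Suc x]" by simp_all
      then have "xs = [x, Suc x]" using E[OF x(1,2)] by simp
      then show "\<exists>x. 1 \<le> x \<and> x \<le> n \<and> xs = [x, Suc x]" using x by (intro exI[of _ x]) simp
    next
      assume "\<exists>x. 1 \<le> x \<and> x \<le> n \<and> xs = [x, Suc x]"
      then obtain x where x: "1 \<le> x" "x \<le> n" "xs = [x, Suc x]" by blast
      then have "map f xs = [x, Suc x]" using E[OF x(1,2)] by simp
      then show "\<exists>x. 1 \<le> x \<and> x \<le> n \<and> map f xs = [x, Suc x]" using x by (intro exI[of _ x]) simp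
    qed
  qed
  have c: "f 1 = 1" "f (Suc n) = Suc n" "f (n+2) = 0" "f 0 = n+2" unfolding f_def by simp_all
  have "Afin n i xs \<longleftrightarrow> Afin' n i (map f xs)" for i xs
    unfolding Afin_def Afin'_def m1 m2 c by simp
  then show ?thesis unfolding iso_def using bf by blast
qed



definition K3 :: "struc set" where "K3 = insert Ainf (range Afin)"
definition K4 :: "struc set" where "K4 = insert Binf K3"

lemma memK4: "X \<in> K4 \<longleftrightarrow> X = Binf \<or> X = Ainf \<or> (\<exists>n. X = Afin n)"
  unfolding K4_def K3_def by auto

lemma memK3: "X \<in> K3 \<longleftrightarrow> X = Ainf \<or> (\<exists>n. X = Afin n)"
  unfolding K3_def by auto

lemma K3_sub: "K3 \<subseteq> K4" unfolding K4_def by auto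

lemma has_F4: "has (Afin n) (pq n)" "has Ainf (pp k)" "has Binf (pp k)"
  unfolding has_def using F4 by blast+

lemma not_has: "\<not> has Ainf (pq k)" "\<not> has Binf (pq k)" "\<not> has (Afin n) (pp (Suc n))"
  "\<not> has Binf rp" "\<not> has Ainf tp"
  unfolding has_def using F2 F3 F5 by blast+

lemma has_F5: "has Ainf rp" "has Binf tp" unfolding has_def using F5 by blast+

lemma pin: assumes "X \<in> K4" "has X (pq m)" shows "X = Afin m"
proof -
  obtain h where h: "holds X h (pq m)" using assms(2) unfolding has_def by blast
  consider "X = Binf" | "X = Ainf" | n where "X = Afin n" using assms(1) unfolding memK4 by blast
  then show ?thesis
  proof cases
    case 1 then show ?thesis using h F2 by simp
  next
    case 2 then show ?thesis using h F2 by simp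
  next
    case 3 then show ?thesis using h F1[of n h m] by simp
  qed
qed

lemma Afin_ne: "Afin n \<noteq> Ainf" "Afin n \<noteq> Binf" "Ainf \<noteq> Binf"
proof -
  have "Afin n 1 [Suc n]" unfolding Afin_def by simp
  moreover have "\<not> Ainf 1 [Suc n]" "\<not> Binf 1 [Suc n]" unfolding Ainf_def Binf_def by simp_all
  ultimately show "Afin n \<noteq> Ainf" "Afin n \<noteq> Binf" by metis+
  have "Ainf 3 [0]" "\<not> Binf 3 [0]" unfolding Ainf_def Binf_def by simp_all
  then show "Ainf \<noteq> Binf" by metis
qed

lemma dist:
  assumes "X \<in> K4" "B \<in> K4" "X \<noteq> B"
  shows "\<exists>pat. finite pat \<and> has X pat \<and> \<not> has B pat"
proof -
  consider "X = Binf" | "X = Ainf" | n where "X = Afin n" using assms(1) unfolding memK4 by blast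
  then show ?thesis
  proof cases
    case 1
    consider "B = Ainf" | m where "B = Afin m" using assms(2,3) 1 unfolding memK4 by blast
    then show ?thesis
    proof cases
      case 1 then show ?thesis using \<open>X = Binf\<close> fin_pats has_F5 not_has by metis
    next
      case 2 then show ?thesis using \<open>X = Binf\<close> fin_pats has_F4 not_has by metis
    qed
  next
    case 2
    consider "B = Binf" | m where "B = Afin m" using assms(2,3) 2 unfolding memK4 by blast
    then show ?thesis
    proof cases
      case 1 then show ?thesis using \<open>X = Ainf\<close> fin_pats has_F5 not_has by metis
    next
      case 2 then show ?thesis using \<open>X = Ainf\<close> fin_pats has_F4 not_has by metis
    qed
  next
    case 3
    have "\<not> has B (pq n)"
    proof
      assume "has B (pq n)"
      then have "B = Afin n" using pin assms(2) by simp
      then show False using assms(3) 3 by simp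
    qed
    then show ?thesis using 3 fin_pats has_F4 by metis
  qed
qed

lemma noniso: assumes "X \<in> K4" "B \<in> K4" "iso X B" shows "X = B"
proof (rule ccontr)
  assume "X \<noteq> B"
  then obtain pat where "finite pat" "has X pat" "\<not> has B pat" using dist assms(1,2) by blast
  then show False using has_iso[OF assms(3)] by simp
qed

lemma countK3: "countable K3" unfolding K3_def by simp
lemma countK4: "countable K4" unfolding K4_def using countK3 by simp

lemma famK4: "family sig5 K4"
  unfolding family_def
proof (intro conjI ballI impI)
  show "countable K4" by (rule countK4)
  fix A assume "A \<in> K4"
  then show "is_struc sig5 A" unfolding memK4 using structs by auto
next
  fix A B assume "A \<in> K4" "B \<in> K4" "iso A B"
  then show "A = B" using noniso by simp
qed

lemma famK3: "family sig5 K3"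
  unfolding family_def
proof (intro conjI ballI impI)
  show "countable K3" by (rule countK3)
  fix A assume "A \<in> K3"
  then show "is_struc sig5 A" unfolding memK3 using structs by auto
next
  fix A B assume "A \<in> K3" "B \<in> K3" "iso A B"
  then show "A = B" using noniso K3_sub by (simp add: subset_iff)
qed

lemma LD_ex: "S \<in> LD \<sigma> K \<Longrightarrow> \<exists>X\<in>K. iso S X" unfolding LD_def by simp

lemma sepK:
  assumes "X \<in> K4" "B \<in> K4" "X \<noteq> B" "iso S X"
  shows "\<exists>s0. \<forall>s\<ge>s0. \<forall>S'. restr S' s = restr S s \<longrightarrow> \<not> iso S' B"
proof -
  obtain pat where "finite pat" "has X pat" "\<not> has B pat" using dist assms(1,2,3) by blast
  then show ?thesis using sep_pat[OF assms(4)] by simp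
qed

lemma co4: "co_learnable sig5 K4"
proof (rule sep_co[OF famK4], intro ballI impI)
  fix S B assume S: "S \<in> LD sig5 K4" and B: "B \<in> K4" and n: "\<not> iso S B"
  obtain X where X: "X \<in> K4" "iso S X" using LD_ex[OF S] by blast
  have "X \<noteq> B" using n X(2) by metis
  then obtain s0 where "\<forall>s\<ge>s0. \<forall>S'. restr S' s = restr S s \<longrightarrow> \<not> iso S' B"
    using sepK[OF X(1) B _ X(2)] by blast
  then show "\<exists>s0. \<forall>s\<ge>s0. \<forall>S'\<in>LD sig5 K4. restr S' s = restr S s \<longrightarrow> \<not> iso S' B" by blast
qed

lemma notId4: "\<not> Id_learnable sig5 K4"
proof
  assume "Id_learnable sig5 K4"
  then obtain \<Gamma> where cont: "continuous_map (subtopology struc_top (LD sig5 K4)) baire_top \<Gamma>"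
    and G: "\<forall>S\<in>LD sig5 K4. \<forall>S'\<in>LD sig5 K4. iso S S' \<longleftrightarrow> \<Gamma> S = \<Gamma> S'"
    unfolding Id_learnable_def by blast
  have AL: "Afin j \<in> LD sig5 K4" for j by (rule K_sub_LD[OF famK4]) (unfold memK4, intro disjI2 exI[of _ j] refl)
  have IL: "Ainf \<in> LD sig5 K4" "Binf \<in> LD sig5 K4" by (rule K_sub_LD[OF famK4], simp add: memK4)+
  have A'L: "Afin' j \<in> LD sig5 K4" for j
  proof -
    have i: "iso (Afin' j) (Afin j)" by (rule iso_sym[OF Afin_Afin'_iso])
    have "Afin j \<in> K4" unfolding memK4 by (intro disjI2 exI[of _ j] refl)
    then have "\<exists>X\<in>K4. iso (Afin' j) X" by (intro bexI[where x="Afin j"] i)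
    then show ?thesis unfolding LD_def using structs by simp
  qed
  have l1: "limitin (subtopology struc_top (LD sig5 K4)) Afin Ainf sequentially"
    unfolding limitin_subtopology using IL AL seq_limit Afin_Ainf_restr by simp
  have l2: "limitin (subtopology struc_top (LD sig5 K4)) Afin' Binf sequentially"
    unfolding limitin_subtopology using IL A'L seq_limit Afin'_Binf_restr by simp
  have m1: "limitin baire_top (\<Gamma> \<circ> Afin) (\<Gamma> Ainf) sequentially" by (rule continuous_map_limit[OF cont l1])
  have m2: "limitin baire_top (\<Gamma> \<circ> Afin') (\<Gamma> Binf) sequentially" by (rule continuous_map_limit[OF cont l2])
  have "\<Gamma> (Afin' j) = \<Gamma> (Afin j)" for j
    using bspec[OF bspec[OF G A'L[of j]] AL[of j]] iso_sym[OF Afin_Afin'_iso[of j]] by simp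
  then have "\<Gamma> \<circ> Afin' = \<Gamma> \<circ> Afin" by (simp add: fun_eq_iff)
  then have m2': "limitin baire_top (\<Gamma> \<circ> Afin) (\<Gamma> Binf) sequentially" using m2 by simp
  have "\<Gamma> Ainf = \<Gamma> Binf" by (rule limitin_Hausdorff_unique[OF m1 m2' trivial_limit_sequentially hausdorff_baire])
  then have "iso Ainf Binf" using bspec[OF bspec[OF G IL(1)] IL(2)] by simp
  then have "Ainf = Binf" using noniso[of Ainf Binf] by (simp add: memK4)
  then show False using Afin_ne by simp
qed



lemma K3_in_K4: "X \<in> K3 \<Longrightarrow> X \<in> K4" using K3_sub by (rule subsetD)

lemma Afin_K3: "Afin k \<in> K3" unfolding memK3 by (intro disjI2 exI[of _ k] refl)
lemma Ainf_K3: "Ainf \<in> K3" unfolding memK3 by simp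

lemma lc3:
  "\<forall>S\<in>LD sig5 K3. \<exists>s. \<forall>S'\<in>LD sig5 K3. restr S' s = restr S s \<longrightarrow>
     (if iso S' (Afin k) then 1 else 0 :: nat) = (if iso S (Afin k) then 1 else 0)"
proof
  fix S assume S: "S \<in> LD sig5 K3"
  obtain X where X: "X \<in> K3" "iso S X" using LD_ex[OF S] by blast
  show "\<exists>s. \<forall>S'\<in>LD sig5 K3. restr S' s = restr S s \<longrightarrow>
     (if iso S' (Afin k) then 1 else 0 :: nat) = (if iso S (Afin k) then 1 else 0)"
  proof (cases "X = Afin k")
    case True
    have "has S (pq k)" using has_iso[OF iso_sym[OF X(2)]] has_F4(1) True by simp
    then obtain s0 where s0: "\<forall>s\<ge>s0. \<forall>S'. restr S' s = restr S s \<longrightarrow> has S' (pq k)"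
      using has_restr[OF fin_pats(1)] by blast
    show ?thesis
    proof (intro exI[of _ s0] ballI impI)
      fix S' assume S': "S' \<in> LD sig5 K3" "restr S' s0 = restr S s0"
      have h: "has S' (pq k)" using s0[rule_format, OF order_refl S'(2)] .
      obtain Y where Y: "Y \<in> K3" "iso S' Y" using LD_ex[OF S'(1)] by blast
      have "has Y (pq k)" by (rule has_iso[OF Y(2) h])
      then have "Y = Afin k" using pin K3_in_K4[OF Y(1)] by simp
      then show "(if iso S' (Afin k) then 1 else 0 :: nat) = (if iso S (Afin k) then 1 else 0)"
        using Y(2) X(2) True by simp
    qed
  next
    case False
    obtain s0 where s0: "\<forall>s\<ge>s0. \<forall>S'. restr S' s = restr S s \<longrightarrow> \<not> iso S' (Afin k)"
      using sepK[OF K3_in_K4[OF X(1)] K3_in_K4[OF Afin_K3] False X(2)] by blast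
    have nS: "\<not> iso S (Afin k)"
    proof
      assume "iso S (Afin k)"
      then have "iso X (Afin k)" using iso_trans[OF iso_sym[OF X(2)]] by simp
      then have "X = Afin k" using noniso K3_in_K4[OF X(1)] K3_in_K4[OF Afin_K3] by simp
      then show False using False by simp
    qed
    show ?thesis
    proof (intro exI[of _ s0] ballI impI)
      fix S' assume S': "S' \<in> LD sig5 K3" "restr S' s0 = restr S s0"
      have "\<not> iso S' (Afin k)" using s0[rule_format, OF order_refl S'(2)] .
      then show "(if iso S' (Afin k) then 1 else 0 :: nat) = (if iso S (Afin k) then 1 else 0)"
        using nS by simp
    qed
  qed
qed

lemma Id3: "Id_learnable sig5 K3"
proof -
  define \<Gamma> where "\<Gamma> S = (\<lambda>k. if iso S (Afin k) then 1 else 0 :: nat)" for S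
  have cont: "continuous_map (subtopology struc_top (LD sig5 K3)) baire_top \<Gamma>"
    unfolding baire_top_def continuous_map_componentwise_UNIV
  proof
    fix k
    show "continuous_map (subtopology struc_top (LD sig5 K3)) (discrete_topology UNIV) (\<lambda>x. \<Gamma> x k)"
      unfolding \<Gamma>_def by (rule loc_const_cont[OF lc3]) simp
  qed
  have G: "\<forall>S\<in>LD sig5 K3. \<forall>S'\<in>LD sig5 K3. iso S S' \<longleftrightarrow> \<Gamma> S = \<Gamma> S'"
  proof (intro ballI iffI)
    fix S S' assume S: "S \<in> LD sig5 K3" and S': "S' \<in> LD sig5 K3"
    {
      assume i: "iso S S'"
      have "iso S (Afin k) \<longleftrightarrow> iso S' (Afin k)" for k
        using iso_trans[OF i] iso_trans[OF iso_sym[OF i]] by metis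
      then show "\<Gamma> S = \<Gamma> S'" unfolding \<Gamma>_def by simp
    }
    {
      assume e: "\<Gamma> S = \<Gamma> S'"
      have e': "iso S (Afin k) \<longleftrightarrow> iso S' (Afin k)" for k
      proof -
        have "\<Gamma> S k = \<Gamma> S' k" using e by simp
        then show ?thesis unfolding \<Gamma>_def by (simp split: if_splits)
      qed
      obtain X where X: "X \<in> K3" "iso S X" using LD_ex[OF S] by blast
      obtain Y where Y: "Y \<in> K3" "iso S' Y" using LD_ex[OF S'] by blast
      show "iso S S'"
      proof (cases "\<exists>n. iso S (Afin n)")
        case True
        then obtain n where n: "iso S (Afin n)" by blast
        then have "iso S' (Afin n)" using e' by simp
        then show ?thesis using iso_trans[OF n iso_sym] by simp
      next
        case False
        then have "\<not> iso S' (Afin n)" for n using e' by simp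
        then have "Y = Ainf" using Y unfolding memK3 by metis
        moreover have "X = Ainf" using X False unfolding memK3 by metis
        ultimately have "iso S Ainf" "iso Ainf S'" using X(2) iso_sym[OF Y(2)] by simp_all
        then show ?thesis by (rule iso_trans)
      qed
    }
  qed
  show ?thesis unfolding Id_learnable_def by (rule exI[of _ \<Gamma>]) (rule conjI[OF cont G])
qed

lemma notFin3: "\<not> Fin_learnable sig5 K3"
proof
  assume "Fin_learnable sig5 K3"
  then obtain M where M: "\<forall>S\<in>LD sig5 K3. \<exists>s0.
      (\<forall>t<s0. M t (restr S t) = None) \<and>
      (\<exists>A\<in>K3. iso S A \<and> (\<forall>t\<ge>s0. M t (restr S t) = Some A))"
    unfolding Fin_learnable_def by blast
  have IL: "Ainf \<in> LD sig5 K3" by (rule K_sub_LD[OF famK3 Ainf_K3])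
  obtain s0 A where s0: "A \<in> K3" "iso Ainf A" "\<forall>t\<ge>s0. M t (restr Ainf t) = Some A"
    using bspec[OF M IL] by blast
  have AL: "Afin s0 \<in> LD sig5 K3" by (rule K_sub_LD[OF famK3 Afin_K3])
  obtain s1 A' where s1: "\<forall>t<s1. M t (restr (Afin s0) t) = None" "A' \<in> K3" "iso (Afin s0) A'"
     "\<forall>t\<ge>s1. M t (restr (Afin s0) t) = Some A'"
    using bspec[OF M AL] by blast
  have m: "M s0 (restr (Afin s0) s0) = Some A" using s0(3) Afin_Ainf_restr[of s0 s0] by simp
  have "s1 \<le> s0"
  proof (rule ccontr)
    assume "\<not> s1 \<le> s0"
    then have "M s0 (restr (Afin s0) s0) = None" using s1(1) by simp
    then show False using m by simp
  qed
  then have "A' = A" using s1(4) m by simp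
  then have "iso (Afin s0) A" using s1(3) by simp
  then have "iso (Afin s0) Ainf" using iso_sym[OF s0(2)] by (rule iso_trans)
  then have "Afin s0 = Ainf" by (rule noniso[OF K3_in_K4[OF Afin_K3] K3_in_K4[OF Ainf_K3]])
  then show False using Afin_ne by simp
qed

lemma restr_restr: "t \<le> s \<Longrightarrow> restr (restr S s) t = restr S t"
  unfolding restr_def by (intro ext) (meson order_trans)

lemma co_fin:
  assumes fam: "family \<sigma> K" and fin: "finite K" and co: "co_learnable \<sigma> K"
  shows "Fin_learnable \<sigma> K"
proof -
  obtain M where M: "\<forall>S\<in>LD \<sigma> K. \<forall>A\<in>K. iso S A \<longrightarrow> {B. \<exists>s. M s (restr S s) = Some B} = K - {A}"
    using co unfolding co_learnable_def by (rule exE)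
  define seen where "seen t D = {B. \<exists>s\<le>t. M s (restr D s) = Some B}" for t D
  define N :: learner where "N t D = (if \<exists>A\<in>K. seen t D = K - {A}
       then Some (THE A. A \<in> K \<and> seen t D = K - {A}) else None)" for t D
  have "\<forall>S\<in>LD \<sigma> K. \<exists>s0. (\<forall>t<s0. N t (restr S t) = None) \<and>
      (\<exists>A\<in>K. iso S A \<and> (\<forall>t\<ge>s0. N t (restr S t) = Some A))"
  proof
    fix S assume S: "S \<in> LD \<sigma> K"
    obtain A where A: "A \<in> K" "iso S A" using LD_ex[OF S] by blast
    have MS: "{B. \<exists>s. M s (restr S s) = Some B} = K - {A}" using M S A by blast
    define sn where "sn t = {B. \<exists>s\<le>t. M s (restr S s) = Some B}" for t
    have seen_eq: "seen t (restr S t) = sn t" for t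
      unfolding seen_def sn_def using restr_restr by (metis (no_types, lifting))
    have sn_sub: "sn t \<subseteq> K - {A}" for t unfolding sn_def using MS by blast
    have sn_mono: "t \<le> t' \<Longrightarrow> sn t \<subseteq> sn t'" for t t' unfolding sn_def using le_trans by blast
    have "\<forall>B\<in>K-{A}. \<exists>s. M s (restr S s) = Some B" using MS by blast
    then obtain c where c: "\<forall>B\<in>K-{A}. M (c B) (restr S (c B)) = Some B" by metis
    have "finite (c ` (K - {A}))" using fin by simp
    then obtain m where m: "\<forall>x\<in>c ` (K - {A}). x \<le> m" using finite_nat_set_iff_bounded_le by blast
    have "sn m = K - {A}"
    proof (rule equalityI[OF sn_sub subsetI])
      fix B assume "B \<in> K - {A}"
      then have "c B \<le> m" "M (c B) (restr S (c B)) = Some B" using m c by auto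
      then show "B \<in> sn m" unfolding sn_def by blast
    qed
    then have ex: "\<exists>t. sn t = K - {A}" by blast
    define s0 where "s0 = (LEAST t. sn t = K - {A})"
    have s0e: "sn s0 = K - {A}" unfolding s0_def by (rule LeastI_ex[OF ex])
    have key: "(\<exists>A'\<in>K. sn t = K - {A'}) \<longleftrightarrow> sn t = K - {A}" for t
    proof
      assume "\<exists>A'\<in>K. sn t = K - {A'}"
      then obtain A' where A': "A' \<in> K" "sn t = K - {A'}" by blast
      show "sn t = K - {A}"
      proof (cases "A' = A")
        case True then show ?thesis using A' by simp
      next
        case False
        then have "A \<in> sn t" using A' A(1) by simp
        then show ?thesis using sn_sub by blast
      qed
    next
      assume "sn t = K - {A}"
      then show "\<exists>A'\<in>K. sn t = K - {A'}" using A(1) by blast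
    qed
    have the: "(THE A'. A' \<in> K \<and> sn t = K - {A'}) = A" if "sn t = K - {A}" for t
    proof (rule the_equality)
      show "A \<in> K \<and> sn t = K - {A}" using A(1) that by simp
      fix A' assume a: "A' \<in> K \<and> sn t = K - {A'}"
      show "A' = A"
      proof (rule ccontr)
        assume "A' \<noteq> A"
        then have "A \<in> sn t" using a A(1) by simp
        then show False using that by simp
      qed
    qed
    have Nt: "N t (restr S t) = (if sn t = K - {A} then Some A else None)" for t
      unfolding N_def seen_eq key using the by simp
    show "\<exists>s0. (\<forall>t<s0. N t (restr S t) = None) \<and>
      (\<exists>A\<in>K. iso S A \<and> (\<forall>t\<ge>s0. N t (restr S t) = Some A))"
    proof (intro exI[of _ s0] conjI allI impI bexI[of _ A])
      fix t assume "t < s0"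
      then have "sn t \<noteq> K - {A}" unfolding s0_def using not_less_Least by blast
      then show "N t (restr S t) = None" using Nt by simp
    next
      show "iso S A" by (rule A(2))
      show "A \<in> K" by (rule A(1))
      fix t assume "s0 \<le> t"
      then have "sn t = K - {A}" using sn_mono[of s0 t] sn_sub[of t] s0e by blast
      then show "N t (restr S t) = Some A" using Nt by simp
    qed
  qed
  then show ?thesis unfolding Fin_learnable_def by (rule exI[of _ N])
qed


theorem mainTheorem5:
  shows "(\<forall>\<sigma> K. family \<sigma> K \<and> Fin_learnable \<sigma> K \<longrightarrow> Id_learnable \<sigma> K)
       \<and> (\<forall>\<sigma> K. family \<sigma> K \<and> Id_learnable \<sigma> K \<longrightarrow> co_learnable \<sigma> K)
       \<and> (\<exists>\<sigma> K. family \<sigma> K \<and> Id_learnable \<sigma> K \<and> \<not> Fin_learnable \<sigma> K)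
       \<and> (\<exists>\<sigma> K. family \<sigma> K \<and> co_learnable \<sigma> K \<and> \<not> Id_learnable \<sigma> K)
       \<and> (\<forall>\<sigma> K. family \<sigma> K \<and> finite K \<longrightarrow>
             (Fin_learnable \<sigma> K \<longleftrightarrow> Id_learnable \<sigma> K) \<and> (Id_learnable \<sigma> K \<longleftrightarrow> co_learnable \<sigma> K))"
proof (intro conjI allI impI)
  fix \<sigma> K assume "family \<sigma> K \<and> Fin_learnable \<sigma> K"
  then show "Id_learnable \<sigma> K" using fin_id by simp
next
  fix \<sigma> K assume "family \<sigma> K \<and> Id_learnable \<sigma> K"
  then show "co_learnable \<sigma> K" using id_co by simp
next
  show "\<exists>\<sigma> K. family \<sigma> K \<and> Id_learnable \<sigma> K \<and> \<not> Fin_learnable \<sigma> K"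
    using famK3 Id3 notFin3 by (intro exI[of _ sig5] exI[of _ K3] conjI)
next
  show "\<exists>\<sigma> K. family \<sigma> K \<and> co_learnable \<sigma> K \<and> \<not> Id_learnable \<sigma> K"
    using famK4 co4 notId4 by (intro exI[of _ sig5] exI[of _ K4] conjI)
next
  fix \<sigma> K assume a: "family \<sigma> K \<and> finite K"
  then have fam: "family \<sigma> K" and fin: "finite K" by simp_all
  have i1: "Fin_learnable \<sigma> K \<Longrightarrow> Id_learnable \<sigma> K" by (rule fin_id[OF fam])
  have i2: "Id_learnable \<sigma> K \<Longrightarrow> co_learnable \<sigma> K" by (rule id_co[OF fam])
  have i3: "co_learnable \<sigma> K \<Longrightarrow> Fin_learnable \<sigma> K" by (rule co_fin[OF fam fin])
  show "Fin_learnable \<sigma> K \<longleftrightarrow> Id_learnable \<sigma> K" using i1 i2 i3 by blast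
  show "Id_learnable \<sigma> K \<longleftrightarrow> co_learnable \<sigma> K" using i1 i2 i3 by blast
qed

end
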